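(* Let $d \ge 1$ and $r \ge 4$ be integers, $\delta_0 \in (0,1)$, $1 \le m \le d$ an integer, and $p_m(x) \in \mathbb{Z}[i][x]$ a polynomial of degree $d-m+1$. Let $N, N_m$ be positive integers with $N \ge N_m$. Let $A\subseteq[N]$ have density $\delta \ge \delta_0$ and let $D$ be a nonempty subset of $[2N^{1/(2d)}]$. Assume the balanced function $f$ of $A$ satisfies \[ \Big| \mathbb{E}_{n\in[N]}\mathbb{E}_{x\in D}\mathbb{E}_{\mathbf{h}\in [N^{1/(8d^r)}]^{d-m}} f(n) f\big(n + p_m(\sigma_{d-m}(x,\mathbf{h}))\big)\Big| \ge \frac{\delta^{2^{m-1}+1}}{2^{3\cdot 2^{m-1}-2}}. \] Define \[ N_0 = \max\left\{N_m,\ \left\lceil\left(\frac{2^{3\cdot 2^{d-1}-1}}{\delta_0^{2^{d-1}+1}}\right)^{4d^r}\right\rceil,\ \left\lceil\left(\frac{2^{3\cdot 2^{d-1}}(2d+2)^{2d+2}2^{2d(2d+1)}M_{p_m}^2}{\delta_0^{2^{d-1}+1}}\right)^4\right\rceil\right\}. \] If $N \ge N_0$, then there exists a polynomial $p_d(x)\in\mathbb{Z}[i][x]$ of degree $1$ with $0 < M_{p_d} \le 2^{d(2d+1)} M_{p_m} N^{1/(8d^{r-2})}$ such that \[ \Big|\mathbb{E}_{n\in[N]}\mathbb{E}_{x\in D} f(n) f(n + p_d(x))\Big| \ge \frac{\delta^{2^{d-1}+1}}{2^{3\cdot 2^{d-1}-2}}. \]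
   Context: For a real number $X\ge 1$, $[X] := \{a+bi \in \mathbb{Z}[i] : a,b \in \mathbb{Z},\ 1 \le a,b \le X\}$; $[X]^j$ is its $j$-fold Cartesian product (for $j=0$ a single empty tuple). For a finite nonempty set $S$, $\mathbb{E}_{x\in S} g(x) := |S|^{-1}\sum_{x\in S} g(x)$. A subset $A\subseteq[N]$ has density $\delta=|A|/N^2$, and its balanced function is $f(n) = \mathbf{1}_A(n) - \delta\mathbf{1}_{[N]}(n)$ for $n\in\mathbb{Z}[i]$. For $x \in \mathbb{Z}[i]$ and $\mathbf{h} = (h_1,\dots,h_j)$, $\sigma_j(x,\mathbf{h}) := x + h_1 + \dots + h_j$. For $p(x) = a_d x^d + \dots + a_0 \in \mathbb{C}[x]$ with $a_d\neq 0$, $M_p := 2\max\{|a_0|,\dots,|a_d|\}$. *)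

theory Defs
  imports "HOL-Analysis.Analysis" "HOL-Computational_Algebra.Polynomial"
begin

definition gauss_int :: "complex set" where
  "gauss_int = {z. Re z \<in> \<int> \<and> Im z \<in> \<int>}"

definition gauss_poly :: "complex poly \<Rightarrow> bool" where
  "gauss_poly p \<longleftrightarrow> (\<forall>i. coeff p i \<in> gauss_int)"

definition gbox :: "real \<Rightarrow> complex set" where
  "gbox X = {Complex (of_int a) (of_int b) | a b :: int.
               1 \<le> a \<and> 1 \<le> b \<and> of_int a \<le> X \<and> of_int b \<le> X}"

definition gbox_pow :: "real \<Rightarrow> nat \<Rightarrow> complex list set" where
  "gbox_pow X j = {hs. length hs = j \<and> set hs \<subseteq> gbox X}"

definition avg :: "'a set \<Rightarrow> ('a \<Rightarrow> real) \<Rightarrow> real" where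
  "avg S g = (\<Sum>x\<in>S. g x) / real (card S)"

definition sigma :: "complex \<Rightarrow> complex list \<Rightarrow> complex" where
  "sigma x hs = x + sum_list hs"

definition balanced_fn :: "complex set \<Rightarrow> nat \<Rightarrow> complex \<Rightarrow> real" where
  "balanced_fn A N n =
     indicator A n - (real (card A) / real N ^ 2) * indicator (gbox (real N)) n"

definition Mp :: "complex poly \<Rightarrow> real" where
  "Mp p = 2 * Max {norm (coeff p i) | i. i \<le> degree p}"

end

theory Submission
  imports Defs
begin

lemma avg_swap: "avg A (\<lambda>a. avg B (\<lambda>b. g a b)) = avg B (\<lambda>b. avg A (\<lambda>a. g a b))"
  unfolding avg_def by (simp add: sum_divide_distrib[symmetric] sum.swap[of _ A B])

lemma avg_cmult: "avg A (\<lambda>a. c * g a) = c * avg A g"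
  unfolding avg_def by (simp add: sum_distrib_left)

lemma avg_product: "avg A (\<lambda>a. avg B (\<lambda>b. g a b)) = avg (A \<times> B) (\<lambda>p. g (fst p) (snd p))"
proof (cases "finite A \<and> finite B")
  case True
  then show ?thesis unfolding avg_def
    by (simp add: sum_divide_distrib[symmetric] sum.cartesian_product card_cartesian_product case_prod_unfold mult.commute)
next
  case False
  then show ?thesis unfolding avg_def
    by (auto simp: card_cartesian_product)
qed

lemma avg_mult: "avg A g * avg B h = avg A (\<lambda>a. avg B (\<lambda>b. g a * h b))"
  unfolding avg_def by (simp add: sum_product sum_divide_distrib[symmetric])

lemma avg_const: "finite A \<Longrightarrow> A \<noteq> {} \<Longrightarrow> avg A (\<lambda>_. c) = c"
  unfolding avg_def by simp

lemma avg_mono: "(\<And>a. a \<in> A \<Longrightarrow> g a \<le> h a) \<Longrightarrow> avg A g \<le> avg A h"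
  unfolding avg_def by (intro divide_right_mono sum_mono) auto

lemma avg_nonneg: "(\<And>a. a \<in> A \<Longrightarrow> 0 \<le> g a) \<Longrightarrow> 0 \<le> avg A g"
  unfolding avg_def by (intro divide_nonneg_nonneg sum_nonneg) auto

lemma avg_diff: "avg A (\<lambda>a. g a - h a) = avg A g - avg A h"
  unfolding avg_def by (simp add: sum_subtractf diff_divide_distrib)

lemma abs_avg_le: "\<bar>avg A g\<bar> \<le> avg A (\<lambda>a. \<bar>g a\<bar>)"
  unfolding avg_def by (simp add: divide_right_mono sum_abs)

lemma avg_cong: "(\<And>a. a \<in> A \<Longrightarrow> g a = h a) \<Longrightarrow> avg A g = avg A h"
  unfolding avg_def by simp

lemma avg_CS: "(avg A (\<lambda>a. u a * v a))^2 \<le> avg A (\<lambda>a. (u a)^2) * avg A (\<lambda>a. (v a)^2)"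
proof -
  have "(\<Sum>a\<in>A. u a * v a)^2 \<le> (\<Sum>a\<in>A. (u a)^2) * (\<Sum>a\<in>A. (v a)^2)"
    by (rule Cauchy_Schwarz_ineq_sum)
  then have "(\<Sum>a\<in>A. u a * v a)^2 / (real (card A))^2 \<le> (\<Sum>a\<in>A. (u a)^2) * (\<Sum>a\<in>A. (v a)^2) / (real (card A))^2"
    by (simp add: divide_right_mono)
  then show ?thesis unfolding avg_def by (simp add: power_divide power2_eq_square)
qed

lemma avg_sq_le: "(avg A v)^2 \<le> avg A (\<lambda>a. (v a)^2)"
proof (cases "finite A \<and> A \<noteq> {}")
  case True
  have "(avg A (\<lambda>a. 1 * v a))^2 \<le> avg A (\<lambda>a. 1^2) * avg A (\<lambda>a. (v a)^2)"
    by (rule avg_CS)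
  with True show ?thesis by (simp add: avg_const)
next
  case False
  then show ?thesis unfolding avg_def by auto
qed

definition cpl :: "int \<times> int \<Rightarrow> complex" where
  "cpl p = Complex (of_int (fst p)) (of_int (snd p))"

lemma inj_cpl: "inj cpl"
  unfolding cpl_def inj_def by (auto simp: complex_eq_iff prod_eq_iff)

lemma gbox_eq: "gbox X = cpl ` ({1..\<lfloor>X\<rfloor>} \<times> {1..\<lfloor>X\<rfloor>})"
  unfolding gbox_def cpl_def by (auto simp: le_floor_iff image_def)

lemma finite_gbox[simp]: "finite (gbox X)"
  unfolding gbox_eq by simp

lemma card_gbox: "card (gbox X) = (nat \<lfloor>X\<rfloor>)^2"
proof -
  have "card (gbox X) = card ({1..\<lfloor>X\<rfloor>} \<times> {1..\<lfloor>X\<rfloor>})"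
    unfolding gbox_eq by (rule card_image) (meson inj_cpl inj_on_subset subset_UNIV)
  also have "\<dots> = (nat \<lfloor>X\<rfloor>)^2" by (simp add: card_cartesian_product power2_eq_square)
  finally show ?thesis .
qed

lemma gbox_nonempty: "1 \<le> X \<Longrightarrow> gbox X \<noteq> {}"
  unfolding gbox_eq by (auto simp: le_floor_iff)

lemma gbox_mem: "z \<in> gbox X \<Longrightarrow> \<exists>a b. z = Complex (of_int a) (of_int b) \<and> 1 \<le> a \<and> 1 \<le> b \<and> of_int a \<le> X \<and> of_int b \<le> X"
  unfolding gbox_def by auto

lemma gauss_int_Complex: "Complex (of_int a) (of_int b) \<in> gauss_int"
  unfolding gauss_int_def by auto

lemma gbox_gauss: "z \<in> gbox X \<Longrightarrow> z \<in> gauss_int"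
  using gbox_mem gauss_int_Complex by blast

lemma gbox_norm: assumes "z \<in> gbox X" shows "norm z \<le> sqrt 2 * X"
proof -
  obtain a b where z: "z = Complex (of_int a) (of_int b)" "1 \<le> a" "1 \<le> b" "of_int a \<le> X" "of_int b \<le> X"
    using gbox_mem[OF assms] by blast
  have "(of_int a)^2 \<le> X^2" "(of_int b)^2 \<le> X^2"
    using z by (auto intro!: power_mono)
  then have "(real_of_int a)^2 + (of_int b)^2 \<le> 2 * X^2" by simp
  then have "sqrt ((real_of_int a)^2 + (of_int b)^2) \<le> sqrt (2 * X^2)" by (rule real_sqrt_le_mono)
  also have "\<dots> = sqrt 2 * X" using z by (simp add: real_sqrt_mult)
  finally show ?thesis using z by (simp add: cmod_def)
qed

lemma gbox_ge1: "z \<in> gbox X \<Longrightarrow> 1 \<le> X"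
  using gbox_mem by fastforce

lemma gbox_pow_0: "gbox_pow X 0 = {[]}"
  unfolding gbox_pow_def by auto

lemma gbox_pow_Suc: "gbox_pow X (Suc k) = (\<lambda>p. fst p # snd p) ` (gbox X \<times> gbox_pow X k)"
  unfolding gbox_pow_def
  by (auto simp: image_def length_Suc_conv)

lemma finite_gbox_pow[simp]: "finite (gbox_pow X k)"
  by (induction k) (auto simp: gbox_pow_0 gbox_pow_Suc)

lemma gbox_pow_nonempty: "1 \<le> X \<Longrightarrow> gbox_pow X k \<noteq> {}"
  by (induction k) (auto simp: gbox_pow_0 gbox_pow_Suc gbox_nonempty)

lemma avg_image: "inj_on h S \<Longrightarrow> avg (h ` S) g = avg S (\<lambda>s. g (h s))"
  unfolding avg_def by (simp add: sum.reindex card_image)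

lemma avg_gbox_pow_Suc:
  "avg (gbox_pow X (Suc k)) g = avg (gbox X) (\<lambda>h. avg (gbox_pow X k) (\<lambda>hs. g (h # hs)))"
proof -
  have "inj_on (\<lambda>p. fst p # snd p) (gbox X \<times> gbox_pow X k)"
    by (auto simp: inj_on_def prod_eq_iff)
  then show ?thesis
    unfolding gbox_pow_Suc by (simp add: avg_image avg_product)
qed

lemma avg_gbox_pow_0: "avg (gbox_pow X 0) g = g []"
  unfolding gbox_pow_0 avg_def by simp

lemma gbox_pow_sum_norm:
  assumes "hs \<in> gbox_pow X k" shows "norm (sum_list hs) \<le> real k * (sqrt 2 * X)"
  using assms
proof (induction hs arbitrary: k)
  case Nil then show ?case unfolding gbox_pow_def by simp
next
  case (Cons h hs)
  then obtain k' where k: "k = Suc k'" "hs \<in> gbox_pow X k'" "h \<in> gbox X"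
    unfolding gbox_pow_def by (cases k) auto
  have "norm (sum_list (h # hs)) \<le> norm h + norm (sum_list hs)" by (simp add: norm_triangle_ineq)
  also have "\<dots> \<le> sqrt 2 * X + real k' * (sqrt 2 * X)"
    using gbox_norm[OF k(3)] Cons.IH[OF k(2)] by linarith
  finally show ?case using k by (simp add: algebra_simps)
qed

lemma card_bad:
  fixes a1 :: int and N :: nat
  shows "card {u\<in>{1..int N}. u - a1 < 1 \<or> u - a1 > int N} \<le> nat \<bar>a1\<bar>"
proof -
  have "{u\<in>{1..int N}. u - a1 < 1 \<or> u - a1 > int N} \<subseteq> {1..a1} \<union> {int N + a1 + 1..int N}"
    by auto
  then have "card {u\<in>{1..int N}. u - a1 < 1 \<or> u - a1 > int N} \<le> card ({1..a1} \<union> {int N + a1 + 1..int N})"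
    by (intro card_mono) auto
  also have "\<dots> \<le> card {1..a1} + card {int N + a1 + 1..int N}" by (rule card_Un_le)
  also have "\<dots> = nat a1 + nat (- a1)" by simp
  also have "\<dots> = nat \<bar>a1\<bar>" by arith
  finally show ?thesis .
qed

lemma card_shift_diff:
  fixes N :: nat and a :: complex
  assumes "a \<in> gauss_int"
  shows "real (card (gbox (real N) - (\<lambda>n. n + a) ` gbox (real N))) \<le> (\<bar>Re a\<bar> + \<bar>Im a\<bar>) * real N"
proof -
  obtain a1 a2 where a: "Re a = of_int a1" "Im a = of_int a2"
    using assms unfolding gauss_int_def by (auto elim!: Ints_cases)
  define B1 where "B1 = {u\<in>{1..int N}. u - a1 < 1 \<or> u - a1 > int N}"
  define B2 where "B2 = {u\<in>{1..int N}. u - a2 < 1 \<or> u - a2 > int N}"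
  have fl: "\<lfloor>real N\<rfloor> = int N" by simp
  have finB: "finite B1" "finite B2" unfolding B1_def B2_def
    by (rule finite_subset[of _ "{1..int N}"], auto)+
  have sub: "gbox (real N) - (\<lambda>n. n + a) ` gbox (real N) \<subseteq> cpl ` (B1 \<times> {1..int N} \<union> {1..int N} \<times> B2)"
  proof
    fix z assume z: "z \<in> gbox (real N) - (\<lambda>n. n + a) ` gbox (real N)"
    then obtain u v where uv: "z = cpl (u, v)" "u \<in> {1..int N}" "v \<in> {1..int N}"
      unfolding gbox_eq fl by auto
    have "cpl (u - a1, v - a2) \<notin> gbox (real N)"
    proof
      assume "cpl (u - a1, v - a2) \<in> gbox (real N)"
      moreover have "z = cpl (u - a1, v - a2) + a"
        using uv a by (simp add: cpl_def complex_eq_iff)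
      ultimately show False using z by auto
    qed
    then have "u \<in> B1 \<or> v \<in> B2"
      using uv unfolding gbox_eq fl B1_def B2_def by auto
    then show "z \<in> cpl ` (B1 \<times> {1..int N} \<union> {1..int N} \<times> B2)"
      using uv by auto
  qed
  have "card (gbox (real N) - (\<lambda>n. n + a) ` gbox (real N)) \<le> card (cpl ` (B1 \<times> {1..int N} \<union> {1..int N} \<times> B2))"
    by (rule card_mono[OF _ sub]) (use finB in auto)
  also have "\<dots> \<le> card (B1 \<times> {1..int N} \<union> {1..int N} \<times> B2)" by (rule card_image_le) (use finB in auto)
  also have "\<dots> \<le> card (B1 \<times> {1..int N}) + card ({1..int N} \<times> B2)" by (rule card_Un_le)
  also have "\<dots> = card B1 * N + N * card B2" by (simp add: card_cartesian_product)
  also have "\<dots> \<le> nat \<bar>a1\<bar> * N + N * nat \<bar>a2\<bar>"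
    using card_bad[of N a1] card_bad[of N a2] unfolding B1_def B2_def
    by (intro add_mono mult_mono) auto
  finally have "real (card (gbox (real N) - (\<lambda>n. n + a) ` gbox (real N))) \<le> real (nat \<bar>a1\<bar> * N + N * nat \<bar>a2\<bar>)"
    by linarith
  also have "\<dots> = (\<bar>Re a\<bar> + \<bar>Im a\<bar>) * real N" using a by (simp add: algebra_simps)
  finally show ?thesis .
qed

lemma shift_sum:
  fixes N :: nat and f :: "complex \<Rightarrow> real" and a b :: complex
  assumes supp: "\<And>z. z \<notin> gbox (real N) \<Longrightarrow> f z = 0"
    and bnd: "\<And>z. \<bar>f z\<bar> \<le> 1"
    and a: "a \<in> gauss_int"
  shows "\<bar>(\<Sum>n\<in>gbox (real N). f (n + a) * f (n + b)) - (\<Sum>n\<in>gbox (real N). f n * f (n + (b - a)))\<bar>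
          \<le> (\<bar>Re a\<bar> + \<bar>Im a\<bar>) * real N"
proof -
  define G where "G = gbox (real N)"
  define G' where "G' = (\<lambda>n. n + a) ` G"
  define g where "g m = f m * f (m + (b - a))" for m
  have g0: "g m = 0" if "m \<notin> G" for m using supp that unfolding g_def G_def by simp
  have fin: "finite G" "finite G'" unfolding G_def G'_def by auto
  have "(\<Sum>n\<in>G. f (n + a) * f (n + b)) = (\<Sum>n\<in>G. g (n + a))"
    unfolding g_def by (simp add: algebra_simps)
  also have "\<dots> = (\<Sum>m\<in>G'. g m)"
    unfolding G'_def by (subst sum.reindex) (auto simp: inj_on_def)
  also have "\<dots> = (\<Sum>m\<in>G' \<inter> G. g m)"
    using fin g0 by (intro sum.mono_neutral_right) auto
  finally have e1: "(\<Sum>n\<in>G. f (n + a) * f (n + b)) = (\<Sum>m\<in>G' \<inter> G. g m)" .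
  have e2: "(\<Sum>n\<in>G. f n * f (n + (b - a))) = (\<Sum>m\<in>G' \<inter> G. g m) + (\<Sum>m\<in>G - G'. g m)"
    unfolding g_def[symmetric] using fin
    by (metis Int_commute sum.Int_Diff)
  have "\<bar>\<Sum>m\<in>G - G'. g m\<bar> \<le> (\<Sum>m\<in>G - G'. \<bar>g m\<bar>)" by (rule sum_abs)
  also have "\<dots> \<le> (\<Sum>m\<in>G - G'. 1)"
    unfolding g_def using bnd
    by (intro sum_mono) (simp add: abs_mult mult_le_one)
  also have "\<dots> = real (card (G - G'))" by simp
  also have "\<dots> \<le> (\<bar>Re a\<bar> + \<bar>Im a\<bar>) * real N"
    unfolding G_def G'_def by (rule card_shift_diff[OF a])
  finally show ?thesis unfolding G_def[symmetric] using e1 e2 by simp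
qed

lemma shift_avg:
  fixes N :: nat and f :: "complex \<Rightarrow> real" and a b :: complex
  assumes supp: "\<And>z. z \<notin> gbox (real N) \<Longrightarrow> f z = 0"
    and bnd: "\<And>z. \<bar>f z\<bar> \<le> 1"
    and a: "a \<in> gauss_int" and N: "N > 0"
  shows "\<bar>avg (gbox (real N)) (\<lambda>n. f (n + a) * f (n + b)) - avg (gbox (real N)) (\<lambda>n. f n * f (n + (b - a)))\<bar>
          \<le> (\<bar>Re a\<bar> + \<bar>Im a\<bar>) / real N"
proof -
  have c: "real (card (gbox (real N))) = real N * real N"
    by (simp add: card_gbox power2_eq_square)
  have "\<bar>avg (gbox (real N)) (\<lambda>n. f (n + a) * f (n + b)) - avg (gbox (real N)) (\<lambda>n. f n * f (n + (b - a)))\<bar>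
      = \<bar>(\<Sum>n\<in>gbox (real N). f (n + a) * f (n + b)) - (\<Sum>n\<in>gbox (real N). f n * f (n + (b - a)))\<bar> / (real N * real N)"
    unfolding avg_def c by (simp add: diff_divide_distrib[symmetric])
  also have "\<dots> \<le> (\<bar>Re a\<bar> + \<bar>Im a\<bar>) * real N / (real N * real N)"
    by (intro divide_right_mono shift_sum[OF supp bnd a]) auto
  also have "\<dots> = (\<bar>Re a\<bar> + \<bar>Im a\<bar>) / real N" using N by simp
  finally show ?thesis .
qed

lemma shift_sq_avg:
  fixes N :: nat and f :: "complex \<Rightarrow> real" and a :: complex
  assumes supp: "\<And>z. z \<notin> gbox (real N) \<Longrightarrow> f z = 0"
  shows "avg (gbox (real N)) (\<lambda>n. (f (n + a))^2) \<le> avg (gbox (real N)) (\<lambda>n. (f n)^2)"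
proof -
  define G where "G = gbox (real N)"
  have fin: "finite G" unfolding G_def by simp
  have "(\<Sum>n\<in>G. (f (n + a))^2) = (\<Sum>m\<in>(\<lambda>n. n + a) ` G. (f m)^2)"
    by (subst sum.reindex) (auto simp: inj_on_def)
  also have "\<dots> = (\<Sum>m\<in>(\<lambda>n. n + a) ` G \<inter> G. (f m)^2)"
    using fin supp unfolding G_def by (intro sum.mono_neutral_right) auto
  also have "\<dots> \<le> (\<Sum>m\<in>G. (f m)^2)"
    using fin by (intro sum_mono2) auto
  finally show ?thesis unfolding avg_def G_def by (simp add: divide_right_mono)
qed

subsection \<open>Gaussian integers closure\<close>

lemma gauss_add[intro]: "a \<in> gauss_int \<Longrightarrow> b \<in> gauss_int \<Longrightarrow> a + b \<in> gauss_int"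
  unfolding gauss_int_def by auto
lemma gauss_diff[intro]: "a \<in> gauss_int \<Longrightarrow> b \<in> gauss_int \<Longrightarrow> a - b \<in> gauss_int"
  unfolding gauss_int_def by auto
lemma gauss_mult[intro]: "a \<in> gauss_int \<Longrightarrow> b \<in> gauss_int \<Longrightarrow> a * b \<in> gauss_int"
  unfolding gauss_int_def by auto
lemma gauss_of_nat[intro]: "of_nat n \<in> gauss_int"
  unfolding gauss_int_def by auto
lemma gauss_zero[intro]: "0 \<in> gauss_int"
  unfolding gauss_int_def by auto
lemma gauss_one[intro]: "1 \<in> gauss_int"
  unfolding gauss_int_def by auto
lemma gauss_power[intro]: "a \<in> gauss_int \<Longrightarrow> a ^ n \<in> gauss_int"
  by (induction n) auto
lemma gauss_sum[intro]: "(\<And>x. x \<in> A \<Longrightarrow> g x \<in> gauss_int) \<Longrightarrow> sum g A \<in> gauss_int"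
  by (induction A rule: infinite_finite_induct) auto
lemma gauss_sum_list[intro]: "set xs \<subseteq> gauss_int \<Longrightarrow> sum_list xs \<in> gauss_int"
  by (induction xs) auto

lemma gauss_nonzero_norm: "a \<in> gauss_int \<Longrightarrow> a \<noteq> 0 \<Longrightarrow> 1 \<le> norm a"
proof -
  assume a: "a \<in> gauss_int" "a \<noteq> 0"
  obtain x y where xy: "Re a = of_int x" "Im a = of_int y"
    using a unfolding gauss_int_def by (auto elim!: Ints_cases)
  have "x \<noteq> 0 \<or> y \<noteq> 0" using a xy by (auto simp: complex_eq_iff)
  then have "0 < x^2 + y^2" by (simp add: sum_power2_gt_zero_iff)
  then have "1 \<le> x^2 + y^2" by simp
  then have "(of_int 1::real) \<le> of_int (x^2 + y^2)" by (simp only: of_int_le_iff)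
  moreover have "(of_int (x^2 + y^2)::real) = (Re a)^2 + (Im a)^2" using xy by simp
  ultimately have "1 \<le> (Re a)^2 + (Im a)^2" by (metis of_int_1)
  then show ?thesis by (simp add: cmod_def)
qed

subsection \<open>Binomial sums\<close>

lemma choose_mono_upper: "m \<le> n \<Longrightarrow> m choose k \<le> n choose k"
proof (induction n)
  case 0 then show ?case by simp
next
  case (Suc n)
  show ?case
  proof (cases "m = Suc n")
    case False
    then have "m choose k \<le> n choose k" using Suc by simp
    also have "\<dots> \<le> Suc n choose k" by (cases k) auto
    finally show ?thesis .
  qed simp
qed

lemma choose_sum_le:
  fixes R :: real assumes R: "0 \<le> R"
  shows "(\<Sum>j\<le>n. real (j choose i) * R ^ (j - i)) \<le> (1 + R) ^ n"
proof (cases "i \<le> n")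
  case False
  then have "(\<Sum>j\<le>n. real (j choose i) * R ^ (j - i)) = 0" by (intro sum.neutral) auto
  then show ?thesis using R by simp
next
  case True
  have "(\<Sum>j\<le>n. real (j choose i) * R ^ (j - i)) = (\<Sum>j\<in>{i..n}. real (j choose i) * R ^ (j - i))"
    by (intro sum.mono_neutral_right) auto
  also have "\<dots> = (\<Sum>k\<in>{..n-i}. real ((i + k) choose i) * R ^ k)"
  proof -
    have "{i..n} = (\<lambda>k. i + k) ` {..n-i}"
    proof (rule set_eqI, rule iffI)
      fix x assume "x \<in> {i..n}"
      then have "x = i + (x - i)" "x - i \<in> {..n-i}" by auto
      then show "x \<in> (\<lambda>k. i + k) ` {..n-i}" by blast
    qed (use True in auto)
    then show ?thesis by (simp add: sum.reindex)
  qed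
  also have "\<dots> \<le> (\<Sum>k\<in>{..n-i}. real (n choose k) * R ^ k)"
  proof (intro sum_mono mult_right_mono)
    fix k assume "k \<in> {..n-i}"
    then have "(i + k) choose i = (i + k) choose k" "i + k \<le> n"
      using True binomial_symmetric[of k "i+k"] by auto
    then show "real ((i + k) choose i) \<le> real (n choose k)"
      using choose_mono_upper by simp
  qed (use R in auto)
  also have "\<dots> \<le> (\<Sum>k\<le>n. real (n choose k) * R ^ k)"
    using R by (intro sum_mono2) auto
  also have "\<dots> = (R + 1) ^ n" by (simp add: binomial_ring)
  finally show ?thesis by (simp add: add.commute)
qed

subsection \<open>Shifted polynomials\<close>

lemma coeff_lin_pow: "coeff ([:h, 1:] ^ j) i = of_nat (j choose i) * (h::complex) ^ (j - i)"
proof (cases "i \<le> j")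
  case True then show ?thesis by (simp add: coeff_linear_poly_power)
next
  case False
  have "degree ([:h, 1:] ^ j) \<le> j"
    by (metis degree_linear_power dual_order.refl)
  then show ?thesis using False by (simp add: coeff_eq_0)
qed

lemma poly_shift: "poly (pcompose q [:h, 1:]) z = poly q ((h::complex) + z)"
  by (simp add: poly_pcompose)

lemma pcompose_shift_sum:
  "pcompose q [:(h::complex), 1:] = (\<Sum>j\<le>degree q. smult (coeff q j) ([:h, 1:] ^ j))"
proof -
  have "poly (pcompose q [:h, 1:]) z = poly (\<Sum>j\<le>degree q. smult (coeff q j) ([:h, 1:] ^ j)) z" for z
  proof -
    have "poly (pcompose q [:h, 1:]) z = (\<Sum>j\<le>degree q. coeff q j * (h + z) ^ j)"
      unfolding poly_shift by (rule poly_altdef)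
    also have "\<dots> = poly (\<Sum>j\<le>degree q. smult (coeff q j) ([:h, 1:] ^ j)) z"
      unfolding poly_sum by simp
    finally show ?thesis .
  qed
  then have "poly (pcompose q [:h, 1:]) = poly (\<Sum>j\<le>degree q. smult (coeff q j) ([:h, 1:] ^ j))"
    by (rule ext)
  then show ?thesis by (rule poly_eq_poly_eq_iff[THEN iffD1])
qed

lemma coeff_shift:
  "coeff (pcompose q [:h, 1:]) i = (\<Sum>j\<le>degree q. coeff q j * (of_nat (j choose i) * (h::complex) ^ (j - i)))"
  by (simp add: pcompose_shift_sum coeff_sum coeff_lin_pow)

lemma gauss_poly_shift:
  "gauss_poly q \<Longrightarrow> h \<in> gauss_int \<Longrightarrow> gauss_poly (pcompose q [:h, 1:])"
  unfolding gauss_poly_def coeff_shift by (intro allI gauss_sum) auto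

lemma gauss_poly_diff: "gauss_poly p \<Longrightarrow> gauss_poly q \<Longrightarrow> gauss_poly (p - q)"
  unfolding gauss_poly_def by auto

lemma Mp_set_fin: "finite {norm (coeff p i) | i. i \<le> degree p}"
proof -
  have "{norm (coeff p i) | i. i \<le> degree p} = (\<lambda>i. norm (coeff p i)) ` {..degree p}" by auto
  then show ?thesis by simp
qed

lemma Mp_coeff: "norm (coeff p i) \<le> Mp p / 2"
proof (cases "i \<le> degree p")
  case True
  then have "norm (coeff p i) \<le> Max {norm (coeff p i) | i. i \<le> degree p}"
    by (intro Max_ge[OF Mp_set_fin]) auto
  then show ?thesis unfolding Mp_def by simp
next
  case False
  have "norm (coeff p 0) \<le> Max {norm (coeff p i) | i. i \<le> degree p}"
    by (intro Max_ge[OF Mp_set_fin]) auto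
  then have "0 \<le> Max {norm (coeff p i) | i. i \<le> degree p}" by (meson norm_ge_zero order_trans)
  then show ?thesis using False unfolding Mp_def by (simp add: coeff_eq_0)
qed

lemma Mp_nonneg: "0 \<le> Mp p"
  using Mp_coeff[of p 0] norm_ge_zero[of "coeff p 0"] by linarith

lemma Mp_le: "(\<And>i. i \<le> degree p \<Longrightarrow> norm (coeff p i) \<le> C) \<Longrightarrow> Mp p \<le> 2 * C"
  unfolding Mp_def using Mp_set_fin[of p]
  by (subst mult_le_cancel_left_pos) (auto intro!: Max.boundedI)

lemma Mp_pos: "p \<noteq> 0 \<Longrightarrow> 0 < Mp p"
proof -
  assume "p \<noteq> 0"
  then have "0 < norm (lead_coeff p)" by simp
  then show ?thesis using Mp_coeff[of p "degree p"] by linarith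
qed

lemma Mp_ge2: "gauss_poly p \<Longrightarrow> p \<noteq> 0 \<Longrightarrow> 2 \<le> Mp p"
  using Mp_coeff[of p "degree p"] gauss_nonzero_norm[of "coeff p (degree p)"]
  unfolding gauss_poly_def by auto

lemma poly_bound:
  assumes "norm z \<le> R" "1 \<le> R"
  shows "norm (poly p z) \<le> real (degree p + 1) * (Mp p / 2) * R ^ degree p"
proof -
  have "norm (poly p z) \<le> (\<Sum>i\<le>degree p. norm (coeff p i * z ^ i))"
    unfolding poly_altdef by (rule norm_sum)
  also have "\<dots> \<le> (\<Sum>i\<le>degree p. (Mp p / 2) * R ^ degree p)"
  proof (intro sum_mono)
    fix i assume i: "i \<in> {..degree p}"
    have "norm z ^ i \<le> R ^ i" using assms by (intro power_mono) auto
    also have "\<dots> \<le> R ^ degree p" using i assms by (intro power_increasing) auto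
    finally have "norm z ^ i \<le> R ^ degree p" .
    then show "norm (coeff p i * z ^ i) \<le> (Mp p / 2) * R ^ degree p"
      unfolding norm_mult norm_power
      by (intro mult_mono Mp_coeff) (auto simp: Mp_nonneg)
  qed
  also have "\<dots> = real (degree p + 1) * (Mp p / 2) * R ^ degree p" by simp
  finally show ?thesis .
qed

lemma shift_coeff_bound:
  assumes "norm h \<le> R"
  shows "norm (coeff (pcompose q [:h, 1:]) i) \<le> (Mp q / 2) * (1 + R) ^ degree q"
proof -
  have R: "0 \<le> R" using assms norm_ge_zero order_trans by blast
  have "norm (coeff (pcompose q [:h, 1:]) i) \<le> (\<Sum>j\<le>degree q. norm (coeff q j * (of_nat (j choose i) * h ^ (j - i))))"
    unfolding coeff_shift by (rule norm_sum)
  also have "\<dots> \<le> (\<Sum>j\<le>degree q. (Mp q / 2) * (real (j choose i) * R ^ (j - i)))"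
  proof (intro sum_mono)
    fix j
    have "norm h ^ (j - i) \<le> R ^ (j - i)" using assms by (intro power_mono) auto
    then show "norm (coeff q j * (of_nat (j choose i) * h ^ (j - i))) \<le> (Mp q / 2) * (real (j choose i) * R ^ (j - i))"
      unfolding norm_mult norm_power norm_of_nat
      by (intro mult_mono Mp_coeff) (auto simp: R Mp_nonneg)
  qed
  also have "\<dots> = (Mp q / 2) * (\<Sum>j\<le>degree q. real (j choose i) * R ^ (j - i))"
    by (simp add: sum_distrib_left)
  also have "\<dots> \<le> (Mp q / 2) * (1 + R) ^ degree q"
    using Mp_coeff[of q 0] by (intro mult_left_mono choose_sum_le R) (meson norm_ge_zero order_trans)
  finally show ?thesis .
qed

lemma coeff_shift_high:
  assumes "degree q \<le> i"
  shows "coeff (pcompose q [:(h::complex), 1:]) i = coeff q i"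
proof -
  have "coeff (pcompose q [:h, 1:]) i = (\<Sum>j\<le>degree q. (if j = i then coeff q j else 0))"
    unfolding coeff_shift
  proof (intro sum.cong refl)
    fix j assume "j \<in> {..degree q}"
    then have "j \<le> i" using assms by auto
    then show "coeff q j * (of_nat (j choose i) * h ^ (j - i)) = (if j = i then coeff q j else 0)"
      by (cases "j = i") auto
  qed
  also have "\<dots> = coeff q i"
    using assms by (cases "i = degree q") (auto simp: coeff_eq_0)
  finally show ?thesis .
qed

lemma coeff_shift_sub:
  assumes "degree q = Suc n"
  shows "coeff (pcompose q [:(h::complex), 1:]) n = coeff q n + coeff q (Suc n) * of_nat (Suc n) * h"
proof -
  have "coeff (pcompose q [:h, 1:]) n = (\<Sum>j\<le>Suc n. coeff q j * (of_nat (j choose n) * h ^ (j - n)))"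
    unfolding coeff_shift assms ..
  also have "\<dots> = (\<Sum>j<n. coeff q j * (of_nat (j choose n) * h ^ (j - n))) + coeff q n + coeff q (Suc n) * of_nat (Suc n) * h"
    by (simp add: lessThan_Suc_atMost[symmetric])
  also have "(\<Sum>j<n. coeff q j * (of_nat (j choose n) * h ^ (j - n))) = 0"
    by (intro sum.neutral) auto
  finally show ?thesis by simp
qed

definition dshift :: "complex poly \<Rightarrow> complex \<Rightarrow> complex \<Rightarrow> complex poly" where
  "dshift q h1 h2 = pcompose q [:h2, 1:] - pcompose q [:h1, 1:]"

lemma poly_dshift: "poly (dshift q h1 h2) z = poly q (h2 + z) - poly q (h1 + z)"
  unfolding dshift_def by (simp add: poly_shift)

lemma gauss_dshift: "gauss_poly q \<Longrightarrow> h1 \<in> gauss_int \<Longrightarrow> h2 \<in> gauss_int \<Longrightarrow> gauss_poly (dshift q h1 h2)"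
  unfolding dshift_def by (intro gauss_poly_diff gauss_poly_shift)

lemma degree_dshift:
  assumes "degree q = Suc n" "h1 \<noteq> h2"
  shows "degree (dshift q h1 h2) = n"
proof (rule antisym)
  show "degree (dshift q h1 h2) \<le> n"
  proof (rule degree_le, intro allI impI)
    fix i assume "n < i"
    then have "degree q \<le> i" using assms by simp
    then show "coeff (dshift q h1 h2) i = 0"
      unfolding dshift_def by (simp add: coeff_shift_high)
  qed
next
  have lc: "coeff q (Suc n) \<noteq> 0"
  proof -
    have "q \<noteq> 0" using assms(1) by auto
    then have "coeff q (degree q) \<noteq> 0" by simp
    then show ?thesis using assms(1) by simp
  qed
  have "coeff (dshift q h1 h2) n = coeff q (Suc n) * of_nat (Suc n) * (h2 - h1)"
    unfolding dshift_def using assms(1) by (simp add: coeff_shift_sub algebra_simps)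
  also have "\<dots> \<noteq> 0" using lc assms(2) by (simp del: of_nat_Suc)
  finally show "n \<le> degree (dshift q h1 h2)" by (rule le_degree)
qed

lemma Mp_dshift:
  assumes "norm h1 \<le> R" "norm h2 \<le> R"
  shows "Mp (dshift q h1 h2) \<le> 2 * (Mp q * (1 + R) ^ degree q)"
proof (rule Mp_le)
  fix i
  have "norm (coeff (dshift q h1 h2) i) \<le> norm (coeff (pcompose q [:h2, 1:]) i) + norm (coeff (pcompose q [:h1, 1:]) i)"
    unfolding dshift_def by (simp add: norm_triangle_ineq4)
  also have "\<dots> \<le> (Mp q / 2) * (1 + R) ^ degree q + (Mp q / 2) * (1 + R) ^ degree q"
    by (intro add_mono shift_coeff_bound assms)
  finally show "norm (coeff (dshift q h1 h2) i) \<le> Mp q * (1 + R) ^ degree q" by simp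
qed

definition Qf :: "(complex \<Rightarrow> real) \<Rightarrow> nat \<Rightarrow> complex set \<Rightarrow> real \<Rightarrow> nat \<Rightarrow> complex poly \<Rightarrow> real" where
  "Qf f N D X k q = avg (gbox (real N)) (\<lambda>n. avg D (\<lambda>x. avg (gbox_pow X k) (\<lambda>hs.
      f n * f (n + poly q (sigma x hs)))))"

lemma gauss_poly_eval: "gauss_poly q \<Longrightarrow> z \<in> gauss_int \<Longrightarrow> poly q z \<in> gauss_int"
  unfolding poly_altdef gauss_poly_def by (intro gauss_sum gauss_mult gauss_power) auto

lemma gauss_sigma: "x \<in> gauss_int \<Longrightarrow> hs \<in> gbox_pow X k \<Longrightarrow> sigma x hs \<in> gauss_int"
  unfolding sigma_def gbox_pow_def using gbox_gauss by (intro gauss_add gauss_sum_list) auto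

lemma pigeon:
  fixes g :: "'a \<Rightarrow> real"
  assumes "finite A" "\<Delta> \<subseteq> A" "sum g \<Delta> \<le> s1" "0 < sum g A - s1"
  shows "\<exists>a\<in>A - \<Delta>. (sum g A - s1) / card A \<le> g a"
proof (rule ccontr)
  assume "\<not> ?thesis"
  then have lt: "\<And>a. a \<in> A - \<Delta> \<Longrightarrow> g a < (sum g A - s1) / card A" by force
  define s where "s = sum g A - s1"
  have s: "0 < s" using assms s_def by simp
  have "sum g (A - \<Delta>) = sum g A - sum g \<Delta>" using assms by (simp add: sum_diff)
  then have ge: "s \<le> sum g (A - \<Delta>)" using assms s_def by simp
  show False
  proof (cases "A - \<Delta> = {}")
    case True then have "sum g (A - \<Delta>) = 0" by (simp only: sum.empty)
    then show False using ge s by simp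
  next
    case False
    have cA: "0 < card A" using False assms(1) card_gt_0_iff by blast
    have "sum g (A - \<Delta>) < sum (\<lambda>_. s / card A) (A - \<Delta>)"
      using False assms(1) lt s_def by (intro sum_strict_mono) auto
    also have "\<dots> = card (A - \<Delta>) * (s / card A)" by simp
    also have "\<dots> \<le> card A * (s / card A)"
      using s assms(1) by (intro mult_right_mono) (auto simp: card_mono)
    also have "\<dots> = s" using cA by simp
    finally show False using ge by simp
  qed
qed

lemma avg_add_const: "finite A \<Longrightarrow> A \<noteq> {} \<Longrightarrow> avg A (\<lambda>a. g a + c) = avg A g + c"
  unfolding avg_def by (simp add: sum.distrib add_divide_distrib)

lemma step:
  fixes f :: "complex \<Rightarrow> real" and N :: nat and D :: "complex set" and X :: real
    and q :: "complex poly" and \<delta> c B :: real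
  assumes supp: "\<And>z. z \<notin> gbox (real N) \<Longrightarrow> f z = 0"
    and bnd: "\<And>z. \<bar>f z\<bar> \<le> 1"
    and N: "N > 0"
    and v: "avg (gbox (real N)) (\<lambda>n. (f n)^2) \<le> \<delta>"
    and \<delta>: "0 < \<delta>"
    and D: "finite D" "D \<noteq> {}" "D \<subseteq> gauss_int"
    and X: "1 \<le> X"
    and q: "gauss_poly q" "degree q = Suc n"
    and B: "\<And>x hs. x \<in> D \<Longrightarrow> hs \<in> gbox_pow X (Suc k) \<Longrightarrow> norm (poly q (sigma x hs)) \<le> B"
    and Q: "c \<le> \<bar>Qf f N D X (Suc k) q\<bar>" and c0: "0 \<le> c"
    and pos: "0 < c^2/\<delta> - \<delta>/card (gbox X) - 2*B/N"
  shows "\<exists>h1\<in>gbox X. \<exists>h2\<in>gbox X. h1 \<noteq> h2 \<and>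
           c^2/\<delta> - \<delta>/card (gbox X) - 2*B/N \<le> Qf f N D X k (dshift q h1 h2)"
proof -
  define G where "G = gbox (real N)"
  define H where "H = gbox X"
  define P where "P = gbox_pow X k"
  define a where "a x h' h = poly q (sigma x (h # h'))" for x h' h
  define W where "W n x h' = avg H (\<lambda>h. f (n + a x h' h))" for n x h'
  have finG: "finite G" "G \<noteq> {}" unfolding G_def using N by (auto intro!: gbox_nonempty)
  have finH: "finite H" "H \<noteq> {}" unfolding H_def using X by (auto intro!: gbox_nonempty)
  have finP: "finite P" "P \<noteq> {}" unfolding P_def using X by (auto intro!: gbox_pow_nonempty)
  have cardH: "0 < card H" using finH card_gt_0_iff by blast
  have B0: "0 \<le> B"
  proof -
    obtain x where "x \<in> D" using D by auto
    moreover obtain hs where "hs \<in> gbox_pow X (Suc k)" using gbox_pow_nonempty[OF X] by blast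
    ultimately show ?thesis using B[of x hs] by (meson norm_ge_zero order_trans)
  qed
  have Qeq: "Qf f N D X (Suc k) q = avg G (\<lambda>n. avg D (\<lambda>x. avg P (\<lambda>h'. f n * W n x h')))"
  proof -
    have "Qf f N D X (Suc k) q = avg G (\<lambda>n. avg D (\<lambda>x. avg H (\<lambda>h. avg P (\<lambda>h'. f n * f (n + a x h' h)))))"
      unfolding Qf_def G_def H_def P_def a_def avg_gbox_pow_Suc ..
    also have "\<dots> = avg G (\<lambda>n. avg D (\<lambda>x. avg P (\<lambda>h'. avg H (\<lambda>h. f n * f (n + a x h' h)))))"
      by (simp only: avg_swap[of H])
    also have "\<dots> = avg G (\<lambda>n. avg D (\<lambda>x. avg P (\<lambda>h'. f n * W n x h')))"
      unfolding W_def by (simp only: avg_cmult)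
    finally show ?thesis .
  qed
  define PP where "PP = G \<times> (D \<times> P)"
  have Qprod: "Qf f N D X (Suc k) q = avg PP (\<lambda>p. f (fst p) * W (fst p) (fst (snd p)) (snd (snd p)))"
    unfolding Qeq PP_def by (simp only: avg_product)
  define T where "T = avg PP (\<lambda>p. (W (fst p) (fst (snd p)) (snd (snd p)))^2)"
  have vv: "avg PP (\<lambda>p. (f (fst p))^2) = avg G (\<lambda>n. (f n)^2)"
  proof -
    have "avg PP (\<lambda>p. (f (fst p))^2) = avg G (\<lambda>n. avg (D \<times> P) (\<lambda>_. (f n)^2))"
      unfolding PP_def by (rule avg_product[of G "D \<times> P" "\<lambda>n _. (f n)^2", symmetric])
    also have "\<dots> = avg G (\<lambda>n. (f n)^2)"
      using D finP by (intro avg_cong avg_const) auto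
    finally show ?thesis .
  qed
  have T0: "0 \<le> T" unfolding T_def by (intro avg_nonneg) auto
  have "c^2 \<le> (Qf f N D X (Suc k) q)^2"
    using power_mono[OF Q c0, of 2] by simp
  also have "\<dots> \<le> avg PP (\<lambda>p. (f (fst p))^2) * T"
    unfolding Qprod T_def by (rule avg_CS)
  also have "\<dots> \<le> \<delta> * T" unfolding vv G_def using v T0 by (intro mult_right_mono) auto
  finally have Tge: "c^2/\<delta> \<le> T" using \<delta> by (simp add: field_simps)
  define K where "K x h' h1 h2 n = f (n + a x h' h1) * f (n + a x h' h2)" for x h' h1 h2 n
  define Gf where "Gf hh = avg D (\<lambda>x. avg P (\<lambda>h'. avg G (\<lambda>n. K x h' (fst hh) (snd hh) n)))" for hh
  have Teq: "T = avg (H \<times> H) Gf"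
  proof -
    have "T = avg G (\<lambda>n. avg D (\<lambda>x. avg P (\<lambda>h'. (W n x h')^2)))"
      unfolding T_def PP_def by (simp only: avg_product)
    also have "\<dots> = avg G (\<lambda>n. avg D (\<lambda>x. avg P (\<lambda>h'. avg H (\<lambda>h1. avg H (\<lambda>h2. K x h' h1 h2 n)))))"
      unfolding W_def K_def power2_eq_square avg_mult ..
    also have "\<dots> = avg G (\<lambda>n. avg D (\<lambda>x. avg P (\<lambda>h'. avg (H \<times> H) (\<lambda>hh. K x h' (fst hh) (snd hh) n))))"
      by (simp only: avg_product[of H H])
    also have "\<dots> = avg D (\<lambda>x. avg P (\<lambda>h'. avg (H \<times> H) (\<lambda>hh. avg G (\<lambda>n. K x h' (fst hh) (snd hh) n))))"
      by (simp only: avg_swap[of G])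
    also have "\<dots> = avg (H \<times> H) (\<lambda>hh. avg D (\<lambda>x. avg P (\<lambda>h'. avg G (\<lambda>n. K x h' (fst hh) (snd hh) n))))"
      by (simp only: avg_swap[of _ "H \<times> H"])
    finally show ?thesis unfolding Gf_def .
  qed
  have diag: "Gf (h, h) \<le> \<delta>" for h
  proof -
    have sq: "avg G (\<lambda>n. K x h' h h n) \<le> avg G (\<lambda>n. (f n)^2)" for x h'
    proof -
      have "avg G (\<lambda>n. K x h' h h n) = avg G (\<lambda>n. (f (n + a x h' h))^2)"
        unfolding K_def power2_eq_square ..
      also have "\<dots> \<le> avg G (\<lambda>n. (f n)^2)" unfolding G_def by (rule shift_sq_avg[OF supp])
      finally show ?thesis .
    qed
    have "Gf (h, h) \<le> avg D (\<lambda>x. avg P (\<lambda>h'. avg G (\<lambda>n. (f n)^2)))"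
      unfolding Gf_def fst_conv snd_conv
      by (rule avg_mono, rule avg_mono) (rule sq)
    also have "\<dots> = avg G (\<lambda>n. (f n)^2)" using D finP by (simp add: avg_const)
    finally show ?thesis using v G_def by simp
  qed
  define \<Delta> where "\<Delta> = (\<lambda>h. (h, h)) ` H"
  have sumD: "sum Gf \<Delta> \<le> card H * \<delta>"
  proof -
    have "sum Gf \<Delta> = (\<Sum>h\<in>H. Gf (h, h))" unfolding \<Delta>_def by (subst sum.reindex) (auto simp: inj_on_def)
    also have "\<dots> \<le> (\<Sum>h\<in>H. \<delta>)" by (intro sum_mono diag)
    finally show ?thesis by simp
  qed
  have sumA: "sum Gf (H \<times> H) = real (card H) ^ 2 * T"
    unfolding Teq avg_def using cardH by (simp add: card_cartesian_product power2_eq_square)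
  have pos2: "0 < c^2/\<delta> - \<delta>/card H" using pos B0 N H_def
    by (smt (verit, best) divide_nonneg_nonneg of_nat_0_le_iff)
  have "0 < real (card H) ^ 2 * (T - \<delta> / card H)"
    using cardH pos2 Tge by (intro mult_pos_pos) auto
  also have "real (card H) ^ 2 * (T - \<delta> / card H) = sum Gf (H \<times> H) - card H * \<delta>"
    unfolding sumA using cardH by (simp add: field_simps power2_eq_square)
  finally have pos3: "0 < sum Gf (H \<times> H) - card H * \<delta>" .
  obtain hh where hh: "hh \<in> H \<times> H - \<Delta>" "(sum Gf (H \<times> H) - card H * \<delta>) / card (H \<times> H) \<le> Gf hh"
    using pigeon[of "H \<times> H" \<Delta> Gf "card H * \<delta>"] finH sumD pos3 unfolding \<Delta>_def by auto
  obtain h1 h2 where h12: "hh = (h1, h2)" "h1 \<in> H" "h2 \<in> H" "h1 \<noteq> h2"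
    using hh(1) unfolding \<Delta>_def by auto
  have "(sum Gf (H \<times> H) - card H * \<delta>) / card (H \<times> H) = T - \<delta> / card H"
    unfolding sumA using cardH by (simp add: card_cartesian_product field_simps power2_eq_square)
  with hh(2) have Gf_ge: "T - \<delta> / card H \<le> Gf hh" by simp
  define qt where "qt = dshift q h1 h2"
  have Gf_le: "Gf hh \<le> Qf f N D X k qt + 2 * B / N"
  proof -
    have "Gf hh \<le> avg D (\<lambda>x. avg P (\<lambda>h'. avg G (\<lambda>n. f n * f (n + poly qt (sigma x h'))) + 2 * B / N))"
      unfolding Gf_def h12(1) fst_conv snd_conv
    proof (intro avg_mono)
      fix x h' assume x: "x \<in> D" and h': "h' \<in> P"
      have mem1: "h1 # h' \<in> gbox_pow X (Suc k)"
        using h' h12 unfolding P_def H_def gbox_pow_def by auto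
      have ga: "a x h' h1 \<in> gauss_int"
        unfolding a_def using q(1) D(3) x mem1 by (intro gauss_poly_eval gauss_sigma) auto
      have diff: "a x h' h2 - a x h' h1 = poly qt (sigma x h')"
        unfolding a_def qt_def poly_dshift sigma_def by (simp add: algebra_simps)
      have "\<bar>avg G (\<lambda>n. K x h' h1 h2 n) - avg G (\<lambda>n. f n * f (n + (a x h' h2 - a x h' h1)))\<bar>
            \<le> (\<bar>Re (a x h' h1)\<bar> + \<bar>Im (a x h' h1)\<bar>) / real N"
        unfolding K_def G_def by (rule shift_avg[OF supp bnd ga N])
      also have "\<dots> \<le> 2 * B / N"
      proof -
        have "\<bar>Re (a x h' h1)\<bar> + \<bar>Im (a x h' h1)\<bar> \<le> 2 * B"
          using abs_Re_le_cmod[of "a x h' h1"] abs_Im_le_cmod[of "a x h' h1"] B[OF x mem1]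
          unfolding a_def by linarith
        then show ?thesis by (intro divide_right_mono) auto
      qed
      finally show "avg G (\<lambda>n. K x h' h1 h2 n) \<le> avg G (\<lambda>n. f n * f (n + poly qt (sigma x h'))) + 2 * B / N"
        unfolding diff by linarith
    qed
    also have "\<dots> = avg D (\<lambda>x. avg P (\<lambda>h'. avg G (\<lambda>n. f n * f (n + poly qt (sigma x h'))))) + 2 * B / N"
      using D finP by (simp add: avg_add_const)
    also have "avg D (\<lambda>x. avg P (\<lambda>h'. avg G (\<lambda>n. f n * f (n + poly qt (sigma x h'))))) = Qf f N D X k qt"
      unfolding Qf_def G_def[symmetric] P_def[symmetric] by (simp only: avg_swap[of _ G])
    finally show ?thesis .
  qed
  show ?thesis
    using h12 Gf_ge Gf_le Tge unfolding qt_def H_def by (intro bexI[of _ h1] bexI[of _ h2]) auto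
qed

definition cc :: "real \<Rightarrow> nat \<Rightarrow> real" where
  "cc \<delta> j = \<delta> ^ (2 ^ (j - 1) + 1) / 2 ^ (3 * 2 ^ (j - 1) - 2)"

lemma cc_sq:
  assumes "1 \<le> j" "0 < \<delta>"
  shows "(cc \<delta> j)^2 / \<delta> = 4 * cc \<delta> (Suc j)"
proof -
  define e :: nat where "e = 2 ^ (j - 1)"
  have e1: "1 \<le> e" unfolding e_def by simp
  have eS: "2 ^ (Suc j - 1) = 2 * e" unfolding e_def using assms(1)
    by (metis Suc_diff_le diff_Suc_1 power_Suc)
  have "(cc \<delta> j)^2 / \<delta> = (\<delta> ^ (e + 1))^2 / \<delta> / (2 ^ (3 * e - 2))^2"
    unfolding cc_def e_def by (simp add: power_divide)
  also have "(\<delta> ^ (e + 1))^2 / \<delta> = \<delta> ^ (2 * e + 1)"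
  proof -
    have "(\<delta> ^ (e + 1))^2 = \<delta> ^ ((e + 1) * 2)" by (rule power_mult[symmetric])
    also have "(e + 1) * 2 = Suc (2 * e + 1)" by simp
    finally show ?thesis using assms(2) by simp
  qed
  also have "((2::real) ^ (3 * e - 2))^2 = 2 ^ (6 * e - 4)"
  proof -
    have "((2::real) ^ (3 * e - 2))^2 = 2 ^ ((3 * e - 2) * 2)" by (rule power_mult[symmetric])
    also have "(3 * e - 2) * 2 = 6 * e - 4" by simp
    finally show ?thesis .
  qed
  finally have A: "(cc \<delta> j)^2 / \<delta> = \<delta> ^ (2 * e + 1) / 2 ^ (6 * e - 4)" .
  have B: "4 * cc \<delta> (Suc j) = \<delta> ^ (2 * e + 1) * 4 / 2 ^ (6 * e - 2)"
    unfolding cc_def eS by (simp add: mult.assoc)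
  have C: "(2::real) ^ (6 * e - 2) = 2 ^ (6 * e - 4) * 4"
  proof -
    have "6 * e - 2 = (6 * e - 4) + 2" using e1 by simp
    then show ?thesis by (simp add: power_add)
  qed
  show ?thesis unfolding A B C by simp
qed

lemma cc_pos: "0 < \<delta> \<Longrightarrow> 0 < cc \<delta> j"
  unfolding cc_def by simp

lemma cc_le: assumes "0 < \<delta>" "\<delta> \<le> 1" shows "cc \<delta> j \<le> \<delta>"
proof -
  have one: "(1::real) \<le> 2 ^ (3 * 2 ^ (j - 1) - 2)" by simp
  have "cc \<delta> j \<le> \<delta> ^ (2 ^ (j - 1) + 1) / 1"
    unfolding cc_def using assms one by (intro divide_left_mono) auto
  then have "cc \<delta> j \<le> \<delta> ^ (2 ^ (j - 1) + 1)" by simp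
  also have "\<dots> = \<delta> * \<delta> ^ (2 ^ (j - 1))" by simp
  also have "\<dots> \<le> \<delta> * 1" using assms by (intro mult_left_mono power_le_one) auto
  finally show ?thesis by simp
qed

lemma cc_Suc_le: assumes "1 \<le> j" "0 < \<delta>" "\<delta> \<le> 1" shows "cc \<delta> (Suc j) \<le> cc \<delta> j"
proof -
  have "cc \<delta> (Suc j) = cc \<delta> j * (cc \<delta> j / (4 * \<delta>))"
    using cc_sq[OF assms(1,2)] assms(2) by (simp add: field_simps power2_eq_square)
  also have "\<dots> \<le> cc \<delta> j * 1"
    using cc_le[OF assms(2,3), of j] cc_pos[OF assms(2), of j] assms(2)
    by (intro mult_left_mono) auto
  finally show ?thesis by simp
qed

lemma cc_mono: assumes "1 \<le> i" "i \<le> j" "0 < \<delta>" "\<delta> \<le> 1" shows "cc \<delta> j \<le> cc \<delta> i"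
  using assms(2)
proof (induction j rule: dec_induct)
  case base then show ?case by simp
next
  case (step j)
  then show ?case using cc_Suc_le[of j \<delta>] assms by simp
qed

lemma iterate:
  fixes f :: "complex \<Rightarrow> real" and N :: nat and D :: "complex set" and X :: real
    and \<delta> Bnd F M0 :: real and s d :: nat
  assumes supp: "\<And>z. z \<notin> gbox (real N) \<Longrightarrow> f z = 0"
    and bnd: "\<And>z. \<bar>f z\<bar> \<le> 1"
    and N: "N > 0"
    and v: "avg (gbox (real N)) (\<lambda>n. (f n)^2) \<le> \<delta>"
    and \<delta>: "0 < \<delta>" "\<delta> \<le> 1"
    and D: "finite D" "D \<noteq> {}" "D \<subseteq> gauss_int"
    and X: "1 \<le> X"
    and F: "1 \<le> F" and M0: "0 \<le> M0"
    and sd: "s < d"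
    and Bnd: "\<And>q x j hs. degree q \<le> d \<Longrightarrow> Mp q \<le> M0 * F ^ s \<Longrightarrow> x \<in> D \<Longrightarrow> j \<le> s \<Longrightarrow>
                 hs \<in> gbox_pow X j \<Longrightarrow> norm (poly q (sigma x hs)) \<le> Bnd"
    and Fq: "\<And>q h1 h2. degree q \<le> d \<Longrightarrow> h1 \<in> gbox X \<Longrightarrow> h2 \<in> gbox X \<Longrightarrow>
                 Mp (dshift q h1 h2) \<le> F * Mp q"
    and err: "\<delta> / card (gbox X) + 2 * Bnd / N \<le> 3 * cc \<delta> d"
  shows "k \<le> s \<Longrightarrow> gauss_poly q \<Longrightarrow> degree q = Suc k \<Longrightarrow> Mp q \<le> M0 * F ^ (s - k) \<Longrightarrow>
         cc \<delta> (d - k) \<le> \<bar>Qf f N D X k q\<bar> \<Longrightarrow>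
         \<exists>pd. gauss_poly pd \<and> degree pd = 1 \<and> Mp pd \<le> M0 * F ^ s \<and> cc \<delta> d \<le> \<bar>Qf f N D X 0 pd\<bar>"
proof (induction k arbitrary: q)
  case 0
  then show ?case by (intro exI[of _ q]) auto
next
  case (Suc k)
  define c where "c = cc \<delta> (d - Suc k)"
  have j1: "1 \<le> d - Suc k" using Suc.prems(1) sd by simp
  have c0: "0 \<le> c" unfolding c_def using cc_pos[OF \<delta>(1)] less_imp_le by blast
  have Fs: "F ^ (s - Suc k) \<le> F ^ s" using F by (intro power_increasing) auto
  have Mpq: "Mp q \<le> M0 * F ^ s"
    using Suc.prems(4) Fs M0 by (meson mult_left_mono order_trans)
  have degq: "degree q \<le> d" using Suc.prems(1,3) sd by simp
  have B: "norm (poly q (sigma x hs)) \<le> Bnd" if "x \<in> D" "hs \<in> gbox_pow X (Suc k)" for x hs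
    using Bnd[OF degq Mpq that(1) _ that(2)] Suc.prems(1) by simp
  have c2: "c^2/\<delta> = 4 * cc \<delta> (d - k)"
    unfolding c_def using cc_sq[OF j1 \<delta>(1)] j1 by (simp add: Suc_diff_Suc)
  have ccd: "cc \<delta> d \<le> cc \<delta> (d - k)" using j1 \<delta> by (intro cc_mono) auto
  have key: "cc \<delta> (d - k) \<le> c^2/\<delta> - \<delta>/card (gbox X) - 2*Bnd/N"
    using c2 ccd err by linarith
  have pos: "0 < c^2/\<delta> - \<delta>/card (gbox X) - 2*Bnd/N"
    using key cc_pos[OF \<delta>(1), of "d - k"] by linarith
  obtain h1 h2 where h: "h1 \<in> gbox X" "h2 \<in> gbox X" "h1 \<noteq> h2"
      "c^2/\<delta> - \<delta>/card (gbox X) - 2*Bnd/N \<le> Qf f N D X k (dshift q h1 h2)"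
    using step[OF supp bnd N v \<delta>(1) D X Suc.prems(2,3) B _ c0 pos, of k] Suc.prems(5) c_def by blast
  define qt where "qt = dshift q h1 h2"
  have g: "gauss_poly qt" unfolding qt_def
    using gauss_dshift[OF Suc.prems(2)] h gbox_gauss by blast
  have dg: "degree qt = Suc k" unfolding qt_def using degree_dshift[OF Suc.prems(3) h(3)] .
  have "Mp qt \<le> F * Mp q" unfolding qt_def using Fq[OF degq h(1,2)] .
  also have "\<dots> \<le> F * (M0 * F ^ (s - Suc k))" using Suc.prems(4) F by (intro mult_left_mono) auto
  also have "\<dots> = M0 * F ^ (s - k)"
  proof -
    have "s - k = Suc (s - Suc k)" using Suc.prems(1) by simp
    then show ?thesis by simp
  qed
  finally have Mqt: "Mp qt \<le> M0 * F ^ (s - k)" .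
  have "cc \<delta> (d - k) \<le> \<bar>Qf f N D X k qt\<bar>" using key h(4) unfolding qt_def by linarith
  then show ?case using Suc.IH[OF _ g dg Mqt] Suc.prems(1) by simp
qed

lemma floor_half: assumes "1 \<le> (X::real)" shows "X^2 / 4 \<le> real ((nat \<lfloor>X\<rfloor>)^2)"
proof -
  have f1: "1 \<le> \<lfloor>X\<rfloor>" using assms by simp
  have "X - 1 < of_int \<lfloor>X\<rfloor>" by linarith
  then have h: "X / 2 \<le> of_int \<lfloor>X\<rfloor>" using f1 by linarith
  have "X^2 / 4 = (X/2)^2" by (simp add: power2_eq_square)
  also have "\<dots> \<le> (of_int \<lfloor>X\<rfloor>)^2" using h assms by (intro power_mono) auto
  also have "\<dots> = real ((nat \<lfloor>X\<rfloor>)^2)" using f1 by simp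
  finally show ?thesis .
qed

lemma nat_ceil_le: "nat \<lceil>y\<rceil> \<le> N \<Longrightarrow> y \<le> real N"
  by linarith

lemma f_facts:
  fixes A :: "complex set" and N :: nat
  assumes A: "A \<subseteq> gbox (real N)" and N: "N > 0"
  defines "\<delta> \<equiv> real (card A) / real N ^ 2"
  shows "\<And>z. z \<notin> gbox (real N) \<Longrightarrow> balanced_fn A N z = 0"
    and "\<delta> \<le> 1" and "0 \<le> \<delta>"
    and "\<And>z. \<bar>balanced_fn A N z\<bar> \<le> 1"
    and "avg (gbox (real N)) (\<lambda>n. (balanced_fn A N n)^2) \<le> \<delta>"
proof -
  show s: "\<And>z. z \<notin> gbox (real N) \<Longrightarrow> balanced_fn A N z = 0"
    using A unfolding balanced_fn_def by (auto simp: indicator_def)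
  have cG: "card (gbox (real N)) = N^2" by (simp add: card_gbox)
  have "card A \<le> N^2" using card_mono[OF _ A] cG by simp
  then have "real (card A) \<le> real N ^ 2" by (metis of_nat_le_iff of_nat_power)
  then show d1: "\<delta> \<le> 1" unfolding \<delta>_def using N by simp
  show d0: "0 \<le> \<delta>" unfolding \<delta>_def by simp
  show "\<bar>balanced_fn A N z\<bar> \<le> 1" for z
    using d1 d0 unfolding balanced_fn_def \<delta>_def[symmetric]
    by (cases "z \<in> A"; cases "z \<in> gbox (real N)") (auto simp: indicator_def)
  have sq: "(balanced_fn A N n)^2 = (1 - 2*\<delta>) * indicator A n + \<delta>^2" if "n \<in> gbox (real N)" for n
    using that unfolding balanced_fn_def \<delta>_def[symmetric]
    by (cases "n \<in> A") (auto simp: indicator_def power2_eq_square algebra_simps)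
  have "avg (gbox (real N)) (\<lambda>n. (balanced_fn A N n)^2) = avg (gbox (real N)) (\<lambda>n. (1 - 2*\<delta>) * indicator A n + \<delta>^2)"
    using sq by (rule avg_cong)
  also have "\<dots> = (1 - 2*\<delta>) * avg (gbox (real N)) (indicator A) + \<delta>^2"
    using N by (simp add: avg_add_const avg_cmult gbox_nonempty)
  also have "avg (gbox (real N)) (indicator A) = \<delta>"
  proof -
    have "(\<Sum>x\<in>gbox (real N). indicator A x) = (\<Sum>x\<in>gbox (real N). if x \<in> A then 1 else (0::real))"
      by (rule sum.cong) (auto simp: indicator_def)
    also have "\<dots> = (\<Sum>x\<in>{x\<in>gbox (real N). x \<in> A}. 1)"
      by (rule sum.inter_filter[symmetric]) simp
    also have "{x\<in>gbox (real N). x \<in> A} = A" using A by auto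
    finally show ?thesis unfolding avg_def cG \<delta>_def by simp
  qed
  finally show "avg (gbox (real N)) (\<lambda>n. (balanced_fn A N n)^2) \<le> \<delta>"
    using d0 by (simp add: algebra_simps power2_eq_square) (metis add_increasing2 mult_nonneg_nonneg order_refl le_add_same_cancel2)
qed

theorem mainTheorem5:
  fixes d r m N Nm :: nat and \<delta>0 :: real and pm :: "complex poly"
    and A D :: "complex set"
  assumes "d \<ge> 1" and "r \<ge> 4" and "0 < \<delta>0" and "\<delta>0 < 1"
    and "1 \<le> m" and "m \<le> d"
    and "gauss_poly pm" and "degree pm = d - m + 1"
    and "N > 0" and "Nm > 0" and "N \<ge> Nm"
    and "A \<subseteq> gbox (real N)"
    and "real (card A) / real N ^ 2 \<ge> \<delta>0"
    and "D \<noteq> {}" and "D \<subseteq> gbox (2 * real N powr (1 / (2 * real d)))"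
    and "\<bar>avg (gbox (real N)) (\<lambda>n. avg D (\<lambda>x.
            avg (gbox_pow (real N powr (1 / (8 * real d ^ r))) (d - m)) (\<lambda>hs.
              balanced_fn A N n * balanced_fn A N (n + poly pm (sigma x hs)))))\<bar>
         \<ge> (real (card A) / real N ^ 2) ^ (2 ^ (m - 1) + 1) / 2 ^ (3 * 2 ^ (m - 1) - 2)"
    and "N \<ge> max Nm (max
          (nat \<lceil>((2::real) ^ (3 * 2 ^ (d - 1) - 1) / \<delta>0 ^ (2 ^ (d - 1) + 1)) ^ (4 * d ^ r)\<rceil>)
          (nat \<lceil>((2::real) ^ (3 * 2 ^ (d - 1)) * real (2 * d + 2) ^ (2 * d + 2)
                  * 2 ^ (2 * d * (2 * d + 1)) * Mp pm ^ 2 / \<delta>0 ^ (2 ^ (d - 1) + 1)) ^ 4\<rceil>))"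
  shows "\<exists>pd. gauss_poly pd \<and> degree pd = 1 \<and> 0 < Mp pd \<and>
           Mp pd \<le> 2 ^ (d * (2 * d + 1)) * Mp pm * real N powr (1 / (8 * real d ^ (r - 2))) \<and>
           \<bar>avg (gbox (real N)) (\<lambda>n. avg D (\<lambda>x.
              balanced_fn A N n * balanced_fn A N (n + poly pd x)))\<bar>
           \<ge> (real (card A) / real N ^ 2) ^ (2 ^ (d - 1) + 1) / 2 ^ (3 * 2 ^ (d - 1) - 2)"
proof -
  note dge1 = assms(1) and rge4 = assms(2) and d0pos = assms(3) and mge1 = assms(5) and mled = assms(6)
  note gpm = assms(7) and degpm = assms(8) and Npos = assms(9) and Asub = assms(12)
  note dens = assms(13) and Dne = assms(14) and Dsub = assms(15) and hyp = assms(16) and Nbig = assms(17)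
  define \<delta> where "\<delta> = real (card A) / real N ^ 2"
  define f where "f = balanced_fn A N"
  define X where "X = real N powr (1 / (8 * real d ^ r))"
  define Nr where "Nr = real N powr (1 / (2 * real d))"
  define s where "s = d - m"
  define M0 where "M0 = Mp pm"
  define F where "F = 2 * (4 * X) ^ d"
  define P where "P = (2::real) ^ (d * (2 * d + 1))"
  define R where "R = (2 * real d + 2) * Nr"
  define Bnd where "Bnd = real (d + 1) * (M0 * F ^ s / 2) * R ^ d"
  define e :: nat where "e = 2 ^ (d - 1) + 1"
  define t :: nat where "t = 3 * 2 ^ (d - 1)"
  have t3: "3 \<le> t" unfolding t_def by simp
  have ccd: "cc \<delta> d = \<delta> ^ e / 2 ^ (t - 2)" unfolding cc_def e_def t_def ..
  have NR: "0 < real N" using Npos by simp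
  have N1: "1 \<le> real N" using Npos by simp
  have dpos: "0 < real d" using dge1 by simp
  have Xpow: "X ^ n = real N powr (real n / (8 * real d ^ r))" for n
    unfolding X_def using NR by (simp add: powr_power)
  have X1: "1 \<le> X" unfolding X_def using N1 dpos by (intro ge_one_powr_ge_zero) auto
  have X0: "0 < X" using X1 by simp
  have dr: "real d ^ r = real d * real d ^ (r - 1)"
    using rge4 by (metis One_nat_def Suc_le_D le_trans numeral_le_iff power_Suc semiring_norm(70) semiring_norm(72) one_le_numeral diff_Suc_1 nat_le_linear not_less_eq_eq)
  have dr2: "real d ^ r = real d ^ 2 * real d ^ (r - 2)"
  proof -
    have "r = 2 + (r - 2)" using rge4 by simp
    then show ?thesis by (metis power_add)
  qed
  have hN: "X ^ (8 * d ^ r) = real N"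
    unfolding Xpow using dpos by simp
  have hNr: "Nr = X ^ (4 * d ^ (r - 1))"
    unfolding Xpow Nr_def using dpos by (simp add: dr field_simps)
  have hfin: "real N powr (1 / (8 * real d ^ (r - 2))) = X ^ (d ^ 2)"
    unfolding Xpow using dpos by (simp add: dr2 field_simps)
  have Nr1: "1 \<le> Nr" unfolding Nr_def using N1 dpos by (intro ge_one_powr_ge_zero) auto
  have XNr: "X \<le> Nr"
  proof -
    have "X ^ 1 \<le> X ^ (4 * d ^ (r - 1))" using X1 dge1 by (intro power_increasing) auto
    then show ?thesis using hNr by simp
  qed
  have ff: "\<And>z. z \<notin> gbox (real N) \<Longrightarrow> f z = 0" "\<delta> \<le> 1" "0 \<le> \<delta>" "\<And>z. \<bar>f z\<bar> \<le> 1"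
      "avg (gbox (real N)) (\<lambda>n. (f n)^2) \<le> \<delta>"
    using f_facts[OF Asub Npos] unfolding f_def \<delta>_def by auto
  have \<delta>pos: "0 < \<delta>" using dens d0pos unfolding \<delta>_def by linarith
  have \<delta>0le: "\<delta>0 \<le> \<delta>" using dens unfolding \<delta>_def .
  have Dfin: "finite D" using Dsub finite_subset finite_gbox by blast
  have Dg: "D \<subseteq> gauss_int" using Dsub gbox_gauss by blast
  have pm0: "pm \<noteq> 0" using degpm by auto
  have M02: "2 \<le> M0" unfolding M0_def using Mp_ge2[OF gpm pm0] .
  have F1: "1 \<le> F"
  proof -
    have "1 \<le> (4 * X) ^ d" using X1 by (intro one_le_power) auto
    then show ?thesis unfolding F_def by linarith
  qed
  have sd: "s < d" unfolding s_def using mge1 mled by simp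
  have sqrt2: "sqrt 2 \<le> 2" by (subst real_sqrt_le_iff') auto
  have Fq: "Mp (dshift q h1 h2) \<le> F * Mp q"
    if "degree q \<le> d" "h1 \<in> gbox X" "h2 \<in> gbox X" for q h1 h2
  proof -
    have "Mp (dshift q h1 h2) \<le> 2 * (Mp q * (1 + sqrt 2 * X) ^ degree q)"
      using gbox_norm that by (intro Mp_dshift) auto
    also have "(1 + sqrt 2 * X) ^ degree q \<le> (4 * X) ^ degree q"
    proof (rule power_mono)
      have "sqrt 2 * X \<le> 2 * X" using sqrt2 X1 by (intro mult_right_mono) auto
      then show "1 + sqrt 2 * X \<le> 4 * X" using X1 by linarith
    qed (use X1 in auto)
    also have "\<dots> \<le> (4 * X) ^ d" using X1 that(1) by (intro power_increasing) auto
    finally have "Mp (dshift q h1 h2) \<le> 2 * (Mp q * (4 * X) ^ d)" using Mp_nonneg[of q]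
      by (simp add: mult_left_mono)
    then show ?thesis unfolding F_def by (simp add: algebra_simps)
  qed
  have R1: "1 \<le> R" unfolding R_def using mult_mono[of 1 "2*real d+2" 1 Nr] Nr1 by simp
  have sigR: "norm (sigma x hs) \<le> R" if "x \<in> D" "j \<le> s" "hs \<in> gbox_pow X j" for x j hs
  proof -
    have n1: "norm x \<le> sqrt 2 * (2 * Nr)" using gbox_norm Dsub that(1) unfolding Nr_def by blast
    have n2: "norm (sum_list hs) \<le> real j * (sqrt 2 * X)" using gbox_pow_sum_norm[OF that(3)] .
    have n3: "real j * (sqrt 2 * X) \<le> real j * (sqrt 2 * Nr)"
      using XNr by (intro mult_left_mono) auto
    have jd: "real j \<le> real d - 1" using that(2) sd by linarith
    have n4: "real j * (sqrt 2 * Nr) \<le> (real d - 1) * (sqrt 2 * Nr)"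
      using jd Nr1 by (intro mult_right_mono) auto
    have "norm (sigma x hs) \<le> norm x + norm (sum_list hs)" unfolding sigma_def by (rule norm_triangle_ineq)
    also have "\<dots> \<le> sqrt 2 * (2 * Nr) + (real d - 1) * (sqrt 2 * Nr)" using n1 n2 n3 n4 by linarith
    also have "\<dots> = sqrt 2 * ((real d + 1) * Nr)" by (simp add: algebra_simps)
    also have "\<dots> \<le> 2 * ((real d + 1) * Nr)" using sqrt2 Nr1 by (intro mult_right_mono) auto
    finally show ?thesis unfolding R_def by (simp add: algebra_simps)
  qed
  have Bq: "norm (poly q (sigma x hs)) \<le> Bnd"
    if "degree q \<le> d" "Mp q \<le> M0 * F ^ s" "x \<in> D" "j \<le> s" "hs \<in> gbox_pow X j" for q x j hs
  proof -
    have "norm (poly q (sigma x hs)) \<le> real (degree q + 1) * (Mp q / 2) * R ^ degree q"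
      by (intro poly_bound sigR[OF that(3-5)] R1)
    also have "\<dots> \<le> real (d + 1) * (M0 * F ^ s / 2) * R ^ d"
    proof -
      have a1: "real (degree q + 1) \<le> real (d + 1)" using that(1) by simp
      have a2: "Mp q / 2 \<le> M0 * F ^ s / 2" using that(2) by simp
      have a3: "R ^ degree q \<le> R ^ d" using R1 that(1) by (rule power_increasing[rotated])
      have p: "0 \<le> Mp q / 2" using Mp_nonneg[of q] by simp
      have "real (degree q + 1) * (Mp q / 2) \<le> real (d + 1) * (M0 * F ^ s / 2)"
        using a1 a2 p by (intro mult_mono) auto
      then show ?thesis by (rule mult_mono[OF _ a3]) (use M02 F1 R1 in auto)
    qed
    finally show ?thesis unfolding Bnd_def .
  qed
  define Y where "Y = (2::real) ^ (3 * 2 ^ (d - 1) - 1) / \<delta>0 ^ (2 ^ (d - 1) + 1)"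
  define Z where "Z = (2::real) ^ (3 * 2 ^ (d - 1)) * real (2 * d + 2) ^ (2 * d + 2)
                  * 2 ^ (2 * d * (2 * d + 1)) * Mp pm ^ 2 / \<delta>0 ^ (2 ^ (d - 1) + 1)"
  have NY: "Y ^ (4 * d ^ r) \<le> real N"
    using Nbig unfolding Y_def by (intro nat_ceil_le) auto
  have NZ: "Z ^ 4 \<le> real N"
    using Nbig unfolding Z_def by (intro nat_ceil_le) auto
  have Ypos: "0 < Y" unfolding Y_def using d0pos by simp
  have Zpos: "0 < Z" unfolding Z_def using d0pos M02 unfolding M0_def by simp
  have XY: "Y \<le> X ^ 2"
  proof -
    have dr0: "0 < d ^ r" using dge1 by simp
    have "Y ^ Suc (4 * d ^ r - 1) \<le> (X ^ 2) ^ Suc (4 * d ^ r - 1)"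
    proof -
      have "Suc (4 * d ^ r - 1) = 4 * d ^ r" using dr0 by simp
      moreover have "(X ^ 2) ^ (4 * d ^ r) = X ^ (8 * d ^ r)" by (simp add: power_mult[symmetric])
      ultimately show ?thesis using NY hN by simp
    qed
    then show ?thesis by (rule power_le_imp_le_base) simp
  qed
  have XZ: "Z \<le> X ^ (2 * d ^ r)"
  proof -
    have "Z ^ Suc 3 \<le> (X ^ (2 * d ^ r)) ^ Suc 3"
    proof -
      have "(X ^ (2 * d ^ r)) ^ Suc 3 = X ^ (8 * d ^ r)" by (simp add: power_mult[symmetric])
      then show ?thesis using NZ hN by simp
    qed
    then show ?thesis by (rule power_le_imp_le_base) simp
  qed
  have cardH: "X ^ 2 / 4 \<le> real (card (gbox X))" unfolding card_gbox using floor_half[OF X1] .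
  have de: "\<delta>0 ^ e \<le> \<delta> ^ e" using \<delta>0le d0pos by (intro power_mono) auto
  have err1: "\<delta> / card (gbox X) \<le> 2 * cc \<delta> d"
  proof -
    have Y4: "0 < Y / 4" using Ypos by simp
    have "Y / 4 \<le> real (card (gbox X))" using XY cardH by linarith
    then have "\<delta> / card (gbox X) \<le> \<delta> / (Y / 4)"
      using Y4 ff(3) by (intro divide_left_mono) auto
    also have "\<dots> = 4 * \<delta> * \<delta>0 ^ e / 2 ^ (t - 1)" unfolding Y_def e_def t_def by simp
    also have "\<dots> \<le> 4 * 1 * \<delta> ^ e / 2 ^ (t - 1)"
      using ff(2,3) de d0pos by (intro divide_right_mono mult_mono) auto
    also have "(2::real) ^ (t - 1) = 2 * 2 ^ (t - 2)"
    proof -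
      have "t - 1 = Suc (t - 2)" using t3 by simp
      then show ?thesis by simp
    qed
    finally show ?thesis unfolding ccd by simp
  qed
  have FsP: "F ^ s \<le> P * X ^ (d ^ 2)"
  proof -
    have "F ^ s = 2 ^ s * 4 ^ (d * s) * X ^ (d * s)"
      unfolding F_def by (simp add: power_mult_distrib power_mult[symmetric])
    also have "(2::real) ^ s * 4 ^ (d * s) = 2 ^ (s + 2 * (d * s))"
      by (simp add: power_add power_mult)
    finally have Fe: "F ^ s = 2 ^ (s + 2 * (d * s)) * X ^ (d * s)" .
    have ex: "s + 2 * (d * s) \<le> d * (2 * d + 1)"
    proof -
      have "d * s \<le> d * d" using sd by simp
      moreover have "d * (2 * d + 1) = d + 2 * (d * d)" by (simp add: algebra_simps)
      ultimately show ?thesis using sd by linarith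
    qed
    have a1: "(2::real) ^ (s + 2 * (d * s)) \<le> P"
      using ex unfolding P_def by (intro power_increasing) auto
    have a2: "X ^ (d * s) \<le> X ^ (d ^ 2)"
      using X1 sd by (intro power_increasing) (auto simp: power2_eq_square)
    show ?thesis unfolding Fe using a1 a2 X1 by (intro mult_mono) (auto simp: P_def)
  qed
  have err2: "2 * Bnd / real N \<le> cc \<delta> d"
  proof -
    define K where "K = real (d + 1) * (2 * real d + 2) ^ d * P"
    have P1: "1 \<le> P" unfolding P_def by simp
    have Kpos: "0 \<le> K" unfolding K_def P_def by simp
    have RD: "R ^ d = (2 * real d + 2) ^ d * X ^ (4 * d ^ r)"
    proof -
      have "Nr ^ d = X ^ (4 * d ^ r)" unfolding hNr power_mult[symmetric]
      proof -
        have "r = Suc (r - 1)" using rge4 by simp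
        then have "d ^ r = d ^ (r - 1) * d" by (metis power_Suc2)
        then have "4 * d ^ (r - 1) * d = 4 * d ^ r" by (simp only: mult.assoc)
        then show "X ^ (4 * d ^ (r - 1) * d) = X ^ (4 * d ^ r)" by (rule arg_cong[where f = "\<lambda>n. X ^ n"])
      qed
      then show ?thesis unfolding R_def by (simp add: power_mult_distrib)
    qed
    have e62: "X ^ (d ^ 2) * X ^ (4 * d ^ r) \<le> X ^ (6 * d ^ r)"
    proof -
      have "d ^ 2 \<le> d ^ r" using dge1 rge4 by (intro power_increasing) auto
      then have "d ^ 2 + 4 * d ^ r \<le> 6 * d ^ r" by simp
      then show ?thesis using X1 by (simp add: power_add[symmetric] power_increasing)
    qed
    have "2 * Bnd = (real (d + 1) * M0) * (F ^ s * R ^ d)" unfolding Bnd_def by simp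
    also have "\<dots> \<le> (real (d + 1) * M0) * ((P * X ^ (d ^ 2)) * R ^ d)"
    proof (rule mult_left_mono)
      show "F ^ s * R ^ d \<le> (P * X ^ (d ^ 2)) * R ^ d" using R1 by (intro mult_right_mono[OF FsP]) simp
    qed (use M02 in simp)
    also have "\<dots> = real (d + 1) * M0 * (P * X ^ (d ^ 2)) * R ^ d" by simp
    also have "\<dots> = K * M0 * (X ^ (d ^ 2) * X ^ (4 * d ^ r))"
      unfolding RD K_def by (simp add: algebra_simps)
    also have "\<dots> \<le> K * M0 * X ^ (6 * d ^ r)"
      using e62 Kpos M02 by (intro mult_left_mono) auto
    finally have B1: "2 * Bnd \<le> K * M0 * X ^ (6 * d ^ r)" .
    have KZ: "K * M0 \<le> cc \<delta> d * Z"
    proof -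
      have "cc \<delta> d * Z = 4 * (\<delta> ^ e / \<delta>0 ^ e) * ((2 * real d + 2) ^ (2 * d + 2) * P ^ 2 * M0 ^ 2)"
      proof -
        have "(2::real) ^ t = 4 * 2 ^ (t - 2)"
        proof -
          have "t = Suc (Suc (t - 2))" using t3 by simp
          then have "(2::real) ^ t = 2 ^ (t - 2) * 2 ^ 2" by (metis power_add add_2_eq_Suc')
          then show ?thesis by simp
        qed
        moreover have "(2::real) ^ (2 * d * (2 * d + 1)) = P ^ 2"
          unfolding P_def by (simp add: power_mult[symmetric] mult.commute mult.left_commute)
        ultimately show ?thesis unfolding ccd Z_def e_def[symmetric] t_def[symmetric] M0_def[symmetric]
          using d0pos by (simp add: field_simps)
      qed
      moreover have "K * M0 \<le> 4 * (\<delta> ^ e / \<delta>0 ^ e) * ((2 * real d + 2) ^ (2 * d + 2) * P ^ 2 * M0 ^ 2)"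
      proof -
        have q1: "1 \<le> \<delta> ^ e / \<delta>0 ^ e" using de d0pos by simp
        have k1: "real (d + 1) * (2 * real d + 2) ^ d \<le> (2 * real d + 2) ^ (2 * d + 2)"
        proof -
          have "real (d + 1) * (2 * real d + 2) ^ d \<le> (2 * real d + 2) * (2 * real d + 2) ^ d" by simp
          also have "\<dots> = (2 * real d + 2) ^ Suc d" by simp
          also have "\<dots> \<le> (2 * real d + 2) ^ (2 * d + 2)" by (intro power_increasing) auto
          finally show ?thesis .
        qed
        have p2: "P \<le> P ^ 2" using P1 by (simp add: power2_eq_square)
        have m2: "M0 \<le> M0 ^ 2" using M02 by (simp add: power2_eq_square)
        have "K * M0 = (real (d + 1) * (2 * real d + 2) ^ d) * P * M0" unfolding K_def by simp
        also have "\<dots> \<le> (2 * real d + 2) ^ (2 * d + 2) * P ^ 2 * M0 ^ 2"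
        proof (rule mult_mono)
          show "real (d + 1) * (2 * real d + 2) ^ d * P \<le> (2 * real d + 2) ^ (2 * d + 2) * P ^ 2"
            by (rule mult_mono[OF k1 p2]) (use P1 in auto)
        qed (use m2 P1 M02 in auto)
        also have "\<dots> \<le> 4 * (\<delta> ^ e / \<delta>0 ^ e) * ((2 * real d + 2) ^ (2 * d + 2) * P ^ 2 * M0 ^ 2)"
        proof -
          have "0 \<le> (2 * real d + 2) ^ (2 * d + 2) * P ^ 2 * M0 ^ 2" by simp
          moreover have "1 \<le> 4 * (\<delta> ^ e / \<delta>0 ^ e)" using q1 by simp
          ultimately have "1 * ((2 * real d + 2) ^ (2 * d + 2) * P ^ 2 * M0 ^ 2) \<le> 4 * (\<delta> ^ e / \<delta>0 ^ e) * ((2 * real d + 2) ^ (2 * d + 2) * P ^ 2 * M0 ^ 2)"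
            by (intro mult_right_mono)
          then show ?thesis by simp
        qed
        finally show ?thesis .
      qed
      ultimately show ?thesis by simp
    qed
    have "cc \<delta> d * Z \<le> cc \<delta> d * X ^ (2 * d ^ r)"
      using XZ cc_pos[OF \<delta>pos, of d] by (intro mult_left_mono) auto
    with KZ have "K * M0 \<le> cc \<delta> d * X ^ (2 * d ^ r)" by linarith
    then have "K * M0 * X ^ (6 * d ^ r) \<le> cc \<delta> d * X ^ (2 * d ^ r) * X ^ (6 * d ^ r)"
      using X1 by (intro mult_right_mono) auto
    with B1 have "2 * Bnd \<le> cc \<delta> d * X ^ (2 * d ^ r) * X ^ (6 * d ^ r)" by linarith
    also have "\<dots> = cc \<delta> d * real N" unfolding hN[symmetric] by (simp add: power_add[symmetric])
    finally show ?thesis using NR by (simp add: divide_le_eq mult.commute)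
  qed
  have err: "\<delta> / card (gbox X) + 2 * Bnd / N \<le> 3 * cc \<delta> d" using err1 err2 by linarith
  have Qhyp: "cc \<delta> (d - s) \<le> \<bar>Qf f N D X s pm\<bar>"
  proof -
    have "d - s = m" unfolding s_def using mled by simp
    then show ?thesis using hyp unfolding Qf_def f_def X_def s_def cc_def \<delta>_def by simp
  qed
  have M0nn: "0 \<le> M0" using M02 by simp
  have degs: "degree pm = Suc s" unfolding s_def using degpm mled by simp
  have main: "\<exists>pd. gauss_poly pd \<and> degree pd = 1 \<and> Mp pd \<le> M0 * F ^ s \<and> cc \<delta> d \<le> \<bar>Qf f N D X 0 pd\<bar>"
    apply (rule iterate[OF ff(1) ff(4) Npos ff(5) \<delta>pos ff(2) Dfin Dne Dg X1 F1 M0nn sd _ Fq err, where k = s and q = pm])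
    using gpm degs Qhyp by (auto simp: M0_def intro: Bq)
  then obtain pd where pd: "gauss_poly pd" "degree pd = 1" "Mp pd \<le> M0 * F ^ s" "cc \<delta> d \<le> \<bar>Qf f N D X 0 pd\<bar>"
    by blast
  have Mpd: "Mp pd \<le> 2 ^ (d * (2 * d + 1)) * Mp pm * real N powr (1 / (8 * real d ^ (r - 2)))"
  proof -
    have "M0 * F ^ s \<le> M0 * (P * X ^ (d ^ 2))" by (rule mult_left_mono[OF FsP M0nn])
    then have "Mp pd \<le> M0 * (P * X ^ (d ^ 2))" using pd(3) by linarith
    then show ?thesis unfolding hfin P_def M0_def by (simp add: algebra_simps)
  qed
  have Mpd0: "0 < Mp pd" using pd(2) by (intro Mp_pos) auto
  have Qfin: "Qf f N D X 0 pd = avg (gbox (real N)) (\<lambda>n. avg D (\<lambda>x.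
              balanced_fn A N n * balanced_fn A N (n + poly pd x)))"
    unfolding Qf_def avg_gbox_pow_0 sigma_def f_def by simp
  show ?thesis
    using pd(1,2) Mpd0 Mpd pd(4) unfolding Qfin ccd[symmetric] cc_def \<delta>_def by (intro exI[of _ pd]) auto
qed

end
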